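(* Let $K$ be a finite field and $G$ a finite group. Every maximal right ideal of $KG$ is checkable.
   Context: A right ideal $I\le KG$ is called checkable if there is $v\in KG$ with $I=\{a\in KG: va=0\}$. *)

theory Defs
  imports Main
begin

text \<open>Group algebra KG of a finite group G (a type of class group_add, the group
operation written additively, not assumed commutative) over a field K:
elements are functions G \<Rightarrow> K, product is convolution
(a*b)(x) = sum over y of a(y) b(y^-1 x).\<close>

definition gconv :: "('g::{group_add,finite} \<Rightarrow> 'k::comm_ring_1) \<Rightarrow> ('g \<Rightarrow> 'k) \<Rightarrow> 'g \<Rightarrow> 'k" where
  "gconv a b = (\<lambda>x. \<Sum>y\<in>UNIV. a y * b (- y + x))"

definition right_ideal :: "(('g::{group_add,finite} \<Rightarrow> 'k::comm_ring_1)) set \<Rightarrow> bool" where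
  "right_ideal I \<longleftrightarrow>
     (\<lambda>_. 0) \<in> I \<and>
     (\<forall>a\<in>I. \<forall>b\<in>I. (\<lambda>x. a x + b x) \<in> I) \<and>
     (\<forall>a\<in>I. (\<lambda>x. - a x) \<in> I) \<and>
     (\<forall>a\<in>I. \<forall>r. gconv a r \<in> I)"

definition maximal_right_ideal :: "(('g::{group_add,finite} \<Rightarrow> 'k::comm_ring_1)) set \<Rightarrow> bool" where
  "maximal_right_ideal I \<longleftrightarrow> right_ideal I \<and> I \<noteq> UNIV \<and>
     (\<forall>J. right_ideal J \<and> I \<subseteq> J \<longrightarrow> J = I \<or> J = UNIV)"

definition checkable :: "(('g::{group_add,finite} \<Rightarrow> 'k::comm_ring_1)) set \<Rightarrow> bool" where
  "checkable I \<longleftrightarrow> (\<exists>v. I = {a. gconv v a = (\<lambda>_. 0)})"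

end

theory Submission
  imports Defs "HOL-Library.Function_Algebras" "HOL.Vector_Spaces"
begin

definition dlt :: "'g \<Rightarrow> 'g \<Rightarrow> 'k::comm_ring_1" where
  "dlt g = (\<lambda>x. if x = g then 1 else 0)"

lemma sum_shift:
  fixes h :: "'g::{group_add,finite} \<Rightarrow> 'k::comm_ring_1"
  shows "(\<Sum>z\<in>UNIV. h z) = (\<Sum>z\<in>UNIV. h (c + z))"
  by (rule sum.reindex_bij_witness[of _ "\<lambda>z. c + z" "\<lambda>z. -c + z"])
     (auto simp: add.assoc[symmetric])

lemma gconv_delta:
  fixes a :: "'g::{group_add,finite} \<Rightarrow> 'k::comm_ring_1"
  shows "gconv a (dlt g) = (\<lambda>z. a (z + - g))"
proof
  fix z
  have "\<And>y::'g. (-y + z = g) = (y = z + - g)"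
    by (metis minus_add_cancel ab_left_minus add_minus_cancel diff_eq_eq diff_conv_add_uminus)
  then have "gconv a (dlt g) z = (\<Sum>y\<in>UNIV. if y = z + - g then a y else 0)"
    unfolding gconv_def dlt_def by (intro sum.cong) auto
  then show "gconv a (dlt g) z = a (z + - g)" by simp
qed

lemma gconv_assoc:
  fixes v :: "'g::{group_add,finite} \<Rightarrow> 'k::comm_ring_1"
  shows "gconv v (gconv a r) = gconv (gconv v a) r"
proof
  fix x
  have "gconv v (gconv a r) x = (\<Sum>y\<in>UNIV. v y * (\<Sum>z\<in>UNIV. a z * r (- z + (- y + x))))"
    by (simp add: gconv_def)
  also have "\<dots> = (\<Sum>y\<in>UNIV. v y * (\<Sum>z\<in>UNIV. a (-y + z) * r (- z + x)))"
  proof (rule sum.cong[OF refl])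
    fix y
    have "(\<Sum>z\<in>UNIV. a z * r (- z + (- y + x))) = (\<Sum>z\<in>UNIV. a (-y + z) * r (- (-y + z) + (- y + x)))"
      by (rule sum_shift)
    also have "\<dots> = (\<Sum>z\<in>UNIV. a (-y + z) * r (- z + x))"
      by (simp add: minus_add add.assoc)
    finally show "v y * (\<Sum>z\<in>UNIV. a z * r (- z + (- y + x))) = v y * (\<Sum>z\<in>UNIV. a (-y + z) * r (- z + x))" by simp
  qed
  also have "\<dots> = (\<Sum>y\<in>UNIV. \<Sum>z\<in>UNIV. v y * a (-y + z) * r (- z + x))"
    by (simp add: sum_distrib_left mult.assoc)
  also have "\<dots> = (\<Sum>z\<in>UNIV. \<Sum>y\<in>UNIV. v y * a (-y + z) * r (- z + x))"
    by (rule sum.swap)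
  also have "\<dots> = gconv (gconv v a) r x"
    by (simp add: gconv_def sum_distrib_right)
  finally show "gconv v (gconv a r) x = gconv (gconv v a) r x" .
qed

lemma gconv_add: "gconv v (\<lambda>x. a x + b x) = (\<lambda>x. gconv v a x + gconv v b x)"
  by (simp add: gconv_def distrib_left sum.distrib)

lemma gconv_neg: "gconv v (\<lambda>x. - a x) = (\<lambda>x. - gconv v a x)"
  by (simp add: gconv_def sum_negf)

lemma gconv_zero: "gconv v (\<lambda>_. 0) = (\<lambda>_. 0)"
  by (simp add: gconv_def)

lemma gconv_one:
  fixes v :: "'g::{group_add,finite} \<Rightarrow> 'k::comm_ring_1"
  shows "gconv v (dlt 0) = v"
  by (simp add: gconv_delta)

lemma ann_right_ideal:
  fixes v :: "'g::{group_add,finite} \<Rightarrow> 'k::comm_ring_1"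
  shows "right_ideal {a. gconv v a = (\<lambda>_. 0)}"
  unfolding right_ideal_def
proof (intro conjI ballI allI)
  fix a r assume "a \<in> {a. gconv v a = (\<lambda>_. 0)}"
  then have "gconv v a = (\<lambda>_. 0)" by simp
  then show "gconv a r \<in> {a. gconv v a = (\<lambda>_. 0)}"
    by (simp add: gconv_assoc) (simp add: gconv_def)
qed (auto simp: gconv_zero gconv_add gconv_neg)

lemma gconv_scal:
  fixes a :: "'g::{group_add,finite} \<Rightarrow> 'k::comm_ring_1"
  shows "gconv a (\<lambda>x. c * dlt 0 x) = (\<lambda>z. c * a z)"
proof
  fix z
  have "gconv a (\<lambda>x. c * dlt 0 x) z = (\<Sum>y\<in>UNIV. if y = z then c * a y else 0)"
    unfolding gconv_def dlt_def
    by (intro sum.cong) (auto, metis ab_left_minus add_minus_cancel)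
  then show "gconv a (\<lambda>x. c * dlt 0 x) z = c * a z" by simp
qed

interpretation fs: vector_space "(\<lambda>c (f::'g \<Rightarrow> 'k::field) x. c * f x)"
  by unfold_locales (auto simp: fun_eq_iff plus_fun_def algebra_simps)

interpretation fsp: vector_space_pair "(\<lambda>c (f::'g \<Rightarrow> 'k::field) x. c * f x)" "(*)"
  by unfold_locales (auto simp: algebra_simps)

lemma sum_fun_app: "(\<Sum>y\<in>A. (f y :: 'a \<Rightarrow> 'b::comm_monoid_add)) x = (\<Sum>y\<in>A. f y x)"
  by (induction A rule: infinite_finite_induct) (auto simp: plus_fun_def)

lemma fun_expand:
  fixes a :: "'g::finite \<Rightarrow> 'k::field"
  shows "a = (\<Sum>y\<in>UNIV. (\<lambda>x. a y * dlt y x))"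
proof
  fix x
  have "(\<Sum>y\<in>UNIV. a y * dlt y x) = (\<Sum>y\<in>UNIV. if y = x then a y else 0)"
    by (intro sum.cong) (auto simp: dlt_def)
  then show "a x = (\<Sum>y\<in>UNIV. (\<lambda>x. a y * dlt y x)) x" by (simp add: sum_fun_app)
qed

theorem mainTheorem6:
  fixes I :: "('g::{group_add,finite} \<Rightarrow> 'k::{field,finite}) set"
  assumes "maximal_right_ideal I"
  shows "checkable I"
proof -
  have RI: "right_ideal I" and NU: "I \<noteq> UNIV"
    and MX: "\<And>J. right_ideal J \<Longrightarrow> I \<subseteq> J \<Longrightarrow> J = I \<or> J = UNIV"
    using assms unfolding maximal_right_ideal_def by auto
  have I0: "(\<lambda>_. 0) \<in> I" and Iadd: "\<And>a b. a \<in> I \<Longrightarrow> b \<in> I \<Longrightarrow> (\<lambda>x. a x + b x) \<in> I"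
    and Imul: "\<And>a r. a \<in> I \<Longrightarrow> gconv a r \<in> I"
    using RI unfolding right_ideal_def by auto
  have sub: "fs.subspace I"
  proof (rule fs.subspaceI)
    show "0 \<in> I" using I0 by (simp add: zero_fun_def)
    fix x y assume "x \<in> I" "y \<in> I"
    then show "x + y \<in> I" using Iadd by (simp add: plus_fun_def)
  next
    fix c x assume "x \<in> I"
    then show "(\<lambda>xa. c * x xa) \<in> I" using Imul[of x "\<lambda>x. c * dlt 0 x"] by (simp add: gconv_scal)
  qed
  obtain w where w: "w \<notin> I" using NU by auto
  obtain B where B: "B \<subseteq> I" "fs.independent B" "I \<subseteq> fs.span B"
    using fs.maximal_independent_subset[of I] by blast
  have spanB: "fs.span B = I" using fs.span_subspace[OF B(1) B(3) sub] .
  have indw: "fs.independent (insert w B)"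
    using fs.independent_insertI[OF _ B(2)] w spanB by simp
  obtain g where g: "Vector_Spaces.linear (\<lambda>c (f::'g \<Rightarrow> 'k) x. c * f x) (*) g"
     "\<forall>x\<in>insert w B. g x = (if x = w then 1 else 0)"
    using fsp.linear_independent_extend[OF indw, of "\<lambda>x. if x = w then 1 else 0"] by blast
  interpret gh: module_hom "(\<lambda>c (f::'g \<Rightarrow> 'k) x. c * f x)" "(*)" g
    using g(1) by (simp add: module_hom_iff_linear)
  have gw: "g w = 1" using g(2) by simp
  have gB: "\<And>b. b \<in> B \<Longrightarrow> g b = 0" using g(2) w B(1) by auto
  have gI: "\<And>a. a \<in> I \<Longrightarrow> g a = 0"
    using gh.eq_0_on_span[OF gB] spanB by blast
  have gexp: "\<And>a. g a = (\<Sum>y\<in>UNIV. a y * g (dlt y))"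
  proof -
    fix a :: "'g \<Rightarrow> 'k"
    have "g a = g (\<Sum>y\<in>UNIV. (\<lambda>x. a y * dlt y x))" using fun_expand[of a] by simp
    also have "\<dots> = (\<Sum>y\<in>UNIV. g (\<lambda>x. a y * dlt y x))" by (rule gh.sum)
    also have "\<dots> = (\<Sum>y\<in>UNIV. a y * g (dlt y))"
      using gh.scale[of _ "dlt _"] by simp
    finally show "g a = (\<Sum>y\<in>UNIV. a y * g (dlt y))" .
  qed
  define v where "v = (\<lambda>y. g (dlt (- y)))"
  have vI: "gconv v a = (\<lambda>_. 0)" if aI: "a \<in> I" for a
  proof
    fix x
    have "gconv v a x = (\<Sum>y\<in>UNIV. g (dlt (- y)) * a (- y + x))"
      by (simp add: gconv_def v_def)
    also have "\<dots> = (\<Sum>z\<in>UNIV. a (z + x) * g (dlt z))"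
      by (rule sum.reindex_bij_witness[of _ "\<lambda>z. - z" "\<lambda>z. - z"]) (auto simp: mult.commute)
    also have "\<dots> = g (gconv a (dlt (- x)))"
      using gexp[of "gconv a (dlt (- x))"] by (simp add: gconv_delta)
    also have "\<dots> = 0" using gI Imul aI by blast
    finally show "gconv v a x = 0" .
  qed
  have vnz: "v \<noteq> (\<lambda>_. 0)"
  proof
    assume v0: "v = (\<lambda>_. 0)"
    have "\<And>y. g (dlt y) = 0"
    proof -
      fix y :: 'g
      have "v (- y) = 0" using v0 by simp
      then show "g (dlt y) = 0" by (simp add: v_def)
    qed
    then have "g w = 0" by (simp add: gexp[of w])
    then show False using gw by simp
  qed
  let ?J = "{a. gconv v a = (\<lambda>_. 0)}"
  have "right_ideal ?J" by (rule ann_right_ideal)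
  moreover have "I \<subseteq> ?J" using vI by blast
  moreover have "?J \<noteq> UNIV"
  proof
    assume "?J = UNIV"
    then have "gconv v (dlt 0) = (\<lambda>_. 0)" by blast
    then show False using vnz by (simp add: gconv_one)
  qed
  ultimately have "?J = I" using MX by blast
  then show ?thesis unfolding checkable_def by blast
qed

end
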